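(* Let $\lambda_1\ge\lambda_2\ge\lambda_3\ge 0$ with $\lambda_1+\lambda_2+\lambda_3=1$, $\lambda_3>0$ and $\lambda_1\neq\lambda_3$. Then there is no maximally entangled state in the set $S(\lambda_1,\lambda_2,\lambda_3,0)$.
   Context: $\mathcal{D}$ denotes the set of two-qubit density matrices, i.e. $\rho\in\mathbb{C}^{4\times4}$ with $\rho=\rho^\dagger$, $\rho\ge 0$, $\mathrm{tr}\rho=1$, acting on $\mathbb{C}^2\otimes\mathbb{C}^2$. For eigenvalues $\lambda_1\ge\lambda_2\ge\lambda_3\ge\lambda_4\ge0$ with $\sum_i\lambda_i=1$, $S(\lambda_1,\lambda_2,\lambda_3,\lambda_4)=\{\rho\in\mathcal{D}:\text{the eigenvalues of }\rho\text{ (with multiplicity) are }\lambda_1,\lambda_2,\lambda_3,\lambda_4\}$. For a set $S\subseteq\mathcal{D}$, a state $\rho\in S$ is called a maximally entangled state in $S$ if for every $\sigma\in S$ there exists an LOCC map (a quantum channel implementable by local operations on each qubit and classical communication between the two parties) $\Lambda$ with $\Lambda(\rho)=\sigma$. *)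

theory Defs
  imports "Jordan_Normal_Form.Schur_Decomposition" "Jordan_Normal_Form.Char_Poly"
begin

text \<open>Kronecker (tensor) product; row index of A (x) B is i_A * dim_row B + i_B,
  i.e. the first tensor factor is party A (Alice), the second is party B (Bob).\<close>
definition kron :: "complex mat \<Rightarrow> complex mat \<Rightarrow> complex mat" where
  "kron A B = mat (dim_row A * dim_row B) (dim_col A * dim_col B)
     (\<lambda>(i,j). A $$ (i div dim_row B, j div dim_col B) * B $$ (i mod dim_row B, j mod dim_col B))"

definition mtrace :: "complex mat \<Rightarrow> complex" where
  "mtrace A = (\<Sum>i<dim_row A. A $$ (i,i))"

definition density_matrix :: "nat \<Rightarrow> complex mat \<Rightarrow> bool" where
  "density_matrix n \<rho> \<longleftrightarrow>
     \<rho> \<in> carrier_mat n n \<and> mat_adjoint \<rho> = \<rho> \<and>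
     (\<forall>v \<in> carrier_vec n. 0 \<le> Re (\<Sum>i<n. cnj (v $ i) * (\<rho> *\<^sub>v v) $ i)) \<and>
     mtrace \<rho> = 1"

definition two_qubit_states :: "complex mat set" where
  "two_qubit_states = {\<rho>. density_matrix 4 \<rho>}"

definition spectrum_class :: "real \<Rightarrow> real \<Rightarrow> real \<Rightarrow> real \<Rightarrow> complex mat set" where
  "spectrum_class l1 l2 l3 l4 = {\<rho> \<in> two_qubit_states.
     char_poly \<rho> = [:- complex_of_real l1, 1:] * [:- complex_of_real l2, 1:] *
                    [:- complex_of_real l3, 1:] * [:- complex_of_real l4, 1:]}"

definition kraus_sum :: "nat \<Rightarrow> complex mat list \<Rightarrow> complex mat" where
  "kraus_sum n Ks = foldr (\<lambda>K acc. mat_adjoint K * K + acc) Ks (0\<^sub>m n n)"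

definition apply_kraus :: "nat \<Rightarrow> complex mat list \<Rightarrow> complex mat \<Rightarrow> complex mat" where
  "apply_kraus n Ks \<rho> = foldr (\<lambda>K acc. K * \<rho> * mat_adjoint K + acc) Ks (0\<^sub>m n n)"

text \<open>locc_kraus a b a' b' Ks: Ks is the list of (branch) Kraus operators of a finite-round,
  finite-outcome LOCC protocol taking C^a (x) C^b to C^a' (x) C^b'.  In each round one party
  performs a local quantum instrument (given by Kraus operators, possibly changing its local
  dimension, which covers local ancillas and discarding), announces the outcome, and the
  rest of the protocol may depend on all previous outcomes.\<close>
inductive locc_kraus :: "nat \<Rightarrow> nat \<Rightarrow> nat \<Rightarrow> nat \<Rightarrow> complex mat list \<Rightarrow> bool" where
  idle: "locc_kraus a b a b [1\<^sub>m (a * b)]"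
| alice: "\<lbrakk> set Ks \<subseteq> carrier_mat c a; kraus_sum a Ks = 1\<^sub>m a;
            \<forall>j < length Ks. locc_kraus c b a' b' (Ls j) \<rbrakk> \<Longrightarrow>
          locc_kraus a b a' b'
            (concat (map (\<lambda>j. map (\<lambda>L. L * kron (Ks ! j) (1\<^sub>m b)) (Ls j)) [0..<length Ks]))"
| bob: "\<lbrakk> set Ks \<subseteq> carrier_mat c b; kraus_sum b Ks = 1\<^sub>m b;
            \<forall>j < length Ks. locc_kraus a c a' b' (Ls j) \<rbrakk> \<Longrightarrow>
          locc_kraus a b a' b'
            (concat (map (\<lambda>j. map (\<lambda>L. L * kron (1\<^sub>m a) (Ks ! j)) (Ls j)) [0..<length Ks]))"

definition locc_map :: "(complex mat \<Rightarrow> complex mat) \<Rightarrow> bool" where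
  "locc_map \<Lambda> \<longleftrightarrow> (\<exists>Ks. locc_kraus 2 2 2 2 Ks \<and> \<Lambda> = apply_kraus 4 Ks)"

definition maximally_entangled_in :: "complex mat set \<Rightarrow> complex mat \<Rightarrow> bool" where
  "maximally_entangled_in S \<rho> \<longleftrightarrow>
     \<rho> \<in> S \<and> (\<forall>\<sigma> \<in> S. \<exists>\<Lambda>. locc_map \<Lambda> \<and> \<Lambda> \<rho> = \<sigma>)"

end

theory Submission
  imports Defs
begin

lemma aux_lt: "a < n \<Longrightarrow> b < s \<Longrightarrow> a * s + b < n * (s::nat)"
proof -
  assume "a < n" "b < s"
  then have "a*s + b < Suc a * s" by simp
  also have "\<dots> \<le> n * s" using \<open>a<n\<close> by (intro mult_le_mono1) simp
  finally show ?thesis .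
qed
lemma sum_divmod: "(\<Sum>k<n*s. f (k div s) (k mod s)) = (\<Sum>k1<n. \<Sum>k2<(s::nat). (f k1 k2 :: 'a::comm_monoid_add))"
proof -
  have "(\<Sum>k1<n. \<Sum>k2<s. f k1 k2) = (\<Sum>(k1,k2)\<in>{..<n}\<times>{..<s}. f k1 k2)"
    by (simp add: sum.cartesian_product)
  also have "\<dots> = (\<Sum>k<n*s. f (k div s) (k mod s))"
  proof (rule sum.reindex_bij_witness[where i="\<lambda>k. (k div s, k mod s)" and j="\<lambda>(a,b). a*s+b"])
  qed (auto simp: less_mult_imp_div_less aux_lt intro!: mod_less_divisor Nat.gr0I)
  finally show ?thesis by simp
qed
lemma kron_dims[simp]: "dim_row (kron A B) = dim_row A * dim_row B" "dim_col (kron A B) = dim_col A * dim_col B"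
  by (simp_all add: kron_def)
lemma kron_carrier: "A \<in> carrier_mat m n \<Longrightarrow> B \<in> carrier_mat r s \<Longrightarrow> kron A B \<in> carrier_mat (m*r) (n*s)"
  unfolding carrier_mat_def by auto
lemma kron_index: "i < dim_row A * dim_row B \<Longrightarrow> j < dim_col A * dim_col B \<Longrightarrow>
   kron A B $$ (i,j) = A $$ (i div dim_row B, j div dim_col B) * B $$ (i mod dim_row B, j mod dim_col B)"
  unfolding kron_def by (subst index_mat(1)) (simp_all only: split)

lemma kron_mult:
  assumes A: "A \<in> carrier_mat m n" and C: "C \<in> carrier_mat n p"
    and B: "B \<in> carrier_mat r s" and D: "D \<in> carrier_mat s t"
  shows "kron A B * kron C D = kron (A*C) (B*D)"
proof -
  have dA: "dim_row A = m" "dim_col A = n" using A by auto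
  have dB: "dim_row B = r" "dim_col B = s" using B by auto
  have dC: "dim_row C = n" "dim_col C = p" using C by auto
  have dD: "dim_row D = s" "dim_col D = t" using D by auto
  note d = dA dB dC dD
  show ?thesis
  proof (rule eq_matI)
  fix i j assume i: "i < dim_row (kron (A*C) (B*D))" and j: "j < dim_col (kron (A*C) (B*D))"
  from i have i': "i < m * r" by (simp add: d)
  from j have j': "j < p * t" by (simp add: d)
  have r0: "r > 0" using i' by (cases r) auto
  have t0: "t > 0" using j' by (cases t) auto
  have id: "i div r < m" "i mod r < r" "j div t < p" "j mod t < t" using i' j' r0 t0
    by (auto simp: less_mult_imp_div_less mult.commute)
  have "(kron A B * kron C D) $$ (i,j) = row (kron A B) i \<bullet> col (kron C D) j"
    using i' j' by (intro index_mult_mat(1)) (simp_all add: d)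
  also have "\<dots> = (\<Sum>k\<in>{0..<n*s}. row (kron A B) i $ k * col (kron C D) j $ k)"
    unfolding scalar_prod_def by (simp add: d)
  also have "\<dots> = (\<Sum>k<n*s. kron A B $$ (i,k) * kron C D $$ (k,j))"
    unfolding atLeast0LessThan using i' j' by (intro sum.cong refl) (simp add: d)
  also have "\<dots> = (\<Sum>k<n*s. (A $$ (i div r, k div s) * C $$ (k div s, j div t)) * (B $$ (i mod r, k mod s) * D $$ (k mod s, j mod t)))"
  proof (rule sum.cong[OF refl])
    fix k assume k: "k \<in> {..<n*s}"
    then show "kron A B $$ (i,k) * kron C D $$ (k,j) = (A $$ (i div r, k div s) * C $$ (k div s, j div t)) * (B $$ (i mod r, k mod s) * D $$ (k mod s, j mod t))"
      using i' j' by (simp add: kron_index d)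
  qed
  also have "\<dots> = (\<Sum>k1<n. \<Sum>k2<s. (A $$ (i div r, k1) * C $$ (k1, j div t)) * (B $$ (i mod r, k2) * D $$ (k2, j mod t)))"
    by (rule sum_divmod)
  also have "\<dots> = (\<Sum>k1<n. A $$ (i div r, k1) * C $$ (k1, j div t)) * (\<Sum>k2<s. B $$ (i mod r, k2) * D $$ (k2, j mod t))"
    by (simp add: sum_product)
  also have "\<dots> = kron (A*C) (B*D) $$ (i,j)"
    using i' j' id by (simp add: kron_index scalar_prod_def atLeast0LessThan d)
  finally show "(kron A B * kron C D) $$ (i,j) = kron (A*C) (B*D) $$ (i,j)" .
  qed (simp_all add: d)
qed

lemma kron_one: "1\<^sub>m (a*b) = kron (1\<^sub>m a) (1\<^sub>m b)"
proof (rule eq_matI)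
  fix i j assume i: "i < dim_row (kron (1\<^sub>m a) (1\<^sub>m b))" and j: "j < dim_col (kron (1\<^sub>m a) (1\<^sub>m b))"
  then have i': "i < a*b" and j': "j < a*b" by auto
  have b0: "b > 0" using i' by (cases b) auto
  have id: "i div b < a" "i mod b < b" "j div b < a" "j mod b < b" using i' j' b0
    by (auto simp: less_mult_imp_div_less mult.commute)
  have "(i = j) = (i div b = j div b \<and> i mod b = j mod b)"
    by (metis div_mult_mod_eq)
  then show "1\<^sub>m (a*b) $$ (i,j) = kron (1\<^sub>m a) (1\<^sub>m b) $$ (i,j)"
    using i' j' id by (simp add: kron_index)
qed auto

lemma locc_prod:
  assumes "locc_kraus a b a' b' Ks"
  shows "\<forall>K\<in>set Ks. \<exists>A B. A \<in> carrier_mat a' a \<and> B \<in> carrier_mat b' b \<and> K = kron A B"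
  using assms
proof (induction rule: locc_kraus.induct)
  case (idle a b)
  show ?case
  proof
    fix K :: "complex mat" assume "K \<in> set [1\<^sub>m (a*b)]"
    then have "K = kron (1\<^sub>m a) (1\<^sub>m b)" using kron_one by simp
    then show "\<exists>A B. A \<in> carrier_mat a a \<and> B \<in> carrier_mat b b \<and> K = kron A B"
      by (intro exI[where x="1\<^sub>m a"] exI[where x="1\<^sub>m b"] conjI one_carrier_mat)
  qed
next
  case (alice Ks c a b a' b' Ls)
  show ?case
  proof
    fix K :: "complex mat" assume "K \<in> set (concat (map (\<lambda>j. map (\<lambda>L. L * kron (Ks ! j) (1\<^sub>m b)) (Ls j)) [0..<length Ks]))"
    then obtain j L where j: "j < length Ks" and L: "L \<in> set (Ls j)" and K: "K = L * kron (Ks ! j) (1\<^sub>m b)"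
      by auto
    from alice.IH j L obtain A B where A: "A \<in> carrier_mat a' c" and B: "B \<in> carrier_mat b' b" and LAB: "L = kron A B"
      by metis
    have Kj: "Ks ! j \<in> carrier_mat c a" using alice.hyps(1) j by auto
    have e: "K = kron (A * Ks ! j) (B * 1\<^sub>m b)" unfolding K LAB
      by (rule kron_mult[OF A Kj B one_carrier_mat])
    have c: "A * Ks ! j \<in> carrier_mat a' a" "B * 1\<^sub>m b \<in> carrier_mat b' b" using A B Kj by auto
    show "\<exists>A B. A \<in> carrier_mat a' a \<and> B \<in> carrier_mat b' b \<and> K = kron A B"
      by (intro exI[where x="A * Ks ! j"] exI[where x="B * 1\<^sub>m b"] conjI c e)
  qed
next
  case (bob Ks c b a a' b' Ls)
  show ?case
  proof
    fix K :: "complex mat" assume "K \<in> set (concat (map (\<lambda>j. map (\<lambda>L. L * kron (1\<^sub>m a) (Ks ! j)) (Ls j)) [0..<length Ks]))"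
    then obtain j L where j: "j < length Ks" and L: "L \<in> set (Ls j)" and K: "K = L * kron (1\<^sub>m a) (Ks ! j)"
      by auto
    from bob.IH j L obtain A B where A: "A \<in> carrier_mat a' a" and B: "B \<in> carrier_mat b' c" and LAB: "L = kron A B"
      by metis
    have Kj: "Ks ! j \<in> carrier_mat c b" using bob.hyps(1) j by auto
    have e: "K = kron (A * 1\<^sub>m a) (B * Ks ! j)" unfolding K LAB
      by (rule kron_mult[OF A one_carrier_mat B Kj])
    have c: "A * 1\<^sub>m a \<in> carrier_mat a' a" "B * Ks ! j \<in> carrier_mat b' b" using A B Kj by auto
    show "\<exists>A B. A \<in> carrier_mat a' a \<and> B \<in> carrier_mat b' b \<and> K = kron A B"
      by (intro exI[where x="A * 1\<^sub>m a"] exI[where x="B * Ks ! j"] conjI c e)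
  qed
qed


definition qfe :: "nat \<Rightarrow> complex mat \<Rightarrow> complex vec \<Rightarrow> complex" where
  "qfe n X v = (\<Sum>i<n. \<Sum>j<n. cnj (v$i) * X$$(i,j) * v$j)"

definition adjv :: "nat \<Rightarrow> complex mat \<Rightarrow> complex vec \<Rightarrow> complex vec" where
  "adjv n K z = vec n (\<lambda>k. \<Sum>i<n. cnj (K$$(i,k)) * z$i)"

lemma adj_entry: "i < dim_col A \<Longrightarrow> j < dim_row A \<Longrightarrow> mat_adjoint A $$ (i,j) = conjugate (A $$ (j,i))"
  unfolding mat_adjoint_def by (simp add: mat_of_rows_def)
lemma adj_dims[simp]: "dim_row (mat_adjoint A) = dim_col A" "dim_col (mat_adjoint A) = dim_row A"
  unfolding mat_adjoint_def by (simp_all add: mat_of_rows_def)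

lemma kraus_term_entry:
  assumes K: "K \<in> carrier_mat n n" and R: "R \<in> carrier_mat n n" and i: "i < n" and j: "j < n"
  shows "(K * R * mat_adjoint K) $$ (i,j) = (\<Sum>k<n. \<Sum>l<n. K$$(i,k) * R$$(k,l) * cnj (K$$(j,l)))"
proof -
  have dK: "dim_row K = n" "dim_col K = n" using K by auto
  have dR: "dim_row R = n" "dim_col R = n" using R by auto
  have "(K * R * mat_adjoint K) $$ (i,j) = (\<Sum>l<n. (K*R)$$(i,l) * mat_adjoint K $$ (l,j))"
    using i j by (simp add: dK dR scalar_prod_def atLeast0LessThan)
  also have "\<dots> = (\<Sum>l<n. (\<Sum>k<n. K$$(i,k) * R$$(k,l)) * cnj (K$$(j,l)))"
    using i j by (intro sum.cong refl) (simp add: dK dR scalar_prod_def atLeast0LessThan adj_entry)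
  also have "\<dots> = (\<Sum>l<n. \<Sum>k<n. K$$(i,k) * R$$(k,l) * cnj (K$$(j,l)))"
    by (simp add: sum_distrib_right)
  also have "\<dots> = (\<Sum>k<n. \<Sum>l<n. K$$(i,k) * R$$(k,l) * cnj (K$$(j,l)))"
    by (rule sum.swap)
  finally show ?thesis .
qed

lemma kraus_term_carrier: "K \<in> carrier_mat n n \<Longrightarrow> R \<in> carrier_mat n n \<Longrightarrow> K * R * mat_adjoint K \<in> carrier_mat n n"
  unfolding carrier_mat_def by simp

lemma apply_kraus_carrier: "R \<in> carrier_mat n n \<Longrightarrow> \<forall>K\<in>set Ks. K \<in> carrier_mat n n \<Longrightarrow> apply_kraus n Ks R \<in> carrier_mat n n"
proof (induction Ks)
  case Nil then show ?case by (simp add: apply_kraus_def)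
next
  case (Cons K Ks)
  then have "apply_kraus n Ks R \<in> carrier_mat n n" by simp
  moreover have "K * R * mat_adjoint K \<in> carrier_mat n n" using Cons.prems by (intro kraus_term_carrier) auto
  ultimately show ?case unfolding apply_kraus_def by simp
qed

lemma apply_kraus_entry: "R \<in> carrier_mat n n \<Longrightarrow> \<forall>K\<in>set Ks. K \<in> carrier_mat n n \<Longrightarrow> i < n \<Longrightarrow> j < n \<Longrightarrow>
  apply_kraus n Ks R $$ (i,j) = (\<Sum>K\<leftarrow>Ks. (K * R * mat_adjoint K) $$ (i,j))"
proof (induction Ks)
  case Nil then show ?case by (simp add: apply_kraus_def)
next
  case (Cons K Ks)
  have c1: "apply_kraus n Ks R \<in> carrier_mat n n" using Cons.prems by (intro apply_kraus_carrier) auto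
  have c2: "K * R * mat_adjoint K \<in> carrier_mat n n" using Cons.prems by (intro kraus_term_carrier) auto
  have "apply_kraus n (K#Ks) R = K * R * mat_adjoint K + apply_kraus n Ks R"
    by (simp add: apply_kraus_def)
  then have "apply_kraus n (K#Ks) R $$ (i,j) = (K * R * mat_adjoint K) $$ (i,j) + apply_kraus n Ks R $$ (i,j)"
    using c1 c2 Cons.prems by (metis carrier_matD(1) carrier_matD(2) index_add_mat(1))
  then show ?case using Cons by simp
qed

lemma qfe_kraus:
  assumes K: "K \<in> carrier_mat n n" and R: "R \<in> carrier_mat n n"
  shows "qfe n (K * R * mat_adjoint K) z = qfe n R (adjv n K z)"
proof -
  have "qfe n (K * R * mat_adjoint K) z = (\<Sum>i<n. \<Sum>j<n. cnj (z$i) * (\<Sum>k<n. \<Sum>l<n. K$$(i,k) * R$$(k,l) * cnj (K$$(j,l))) * z$j)"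
    unfolding qfe_def by (intro sum.cong refl) (subst kraus_term_entry[OF K R], auto)
  also have "\<dots> = (\<Sum>i<n. \<Sum>j<n. \<Sum>k<n. \<Sum>l<n. cnj (z$i) * K$$(i,k) * R$$(k,l) * cnj (K$$(j,l)) * z$j)"
    by (simp add: sum_distrib_left sum_distrib_right mult.assoc)
  also have "\<dots> = (\<Sum>i<n. \<Sum>k<n. \<Sum>j<n. \<Sum>l<n. cnj (z$i) * K$$(i,k) * R$$(k,l) * cnj (K$$(j,l)) * z$j)"
    by (intro sum.cong refl sum.swap)
  also have "\<dots> = (\<Sum>k<n. \<Sum>i<n. \<Sum>j<n. \<Sum>l<n. cnj (z$i) * K$$(i,k) * R$$(k,l) * cnj (K$$(j,l)) * z$j)"
    by (rule sum.swap)
  also have "\<dots> = (\<Sum>k<n. \<Sum>i<n. \<Sum>l<n. \<Sum>j<n. cnj (z$i) * K$$(i,k) * R$$(k,l) * cnj (K$$(j,l)) * z$j)"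
    by (intro sum.cong refl sum.swap)
  also have "\<dots> = (\<Sum>k<n. \<Sum>l<n. \<Sum>i<n. \<Sum>j<n. cnj (z$i) * K$$(i,k) * R$$(k,l) * cnj (K$$(j,l)) * z$j)"
    by (intro sum.cong refl sum.swap)
  also have "\<dots> = qfe n R (adjv n K z)"
    unfolding qfe_def adjv_def
    by (intro sum.cong refl) (simp add: sum_distrib_left sum_distrib_right mult_ac)
  finally show ?thesis .
qed


definition bil :: "nat \<Rightarrow> complex mat \<Rightarrow> complex vec \<Rightarrow> complex vec \<Rightarrow> complex" where
  "bil n X u v = (\<Sum>i<n. \<Sum>j<n. cnj (u$i) * X$$(i,j) * v$j)"

lemma qfe_bil: "qfe n X v = bil n X v v" unfolding qfe_def bil_def ..

lemma dens_carrier: "density_matrix n R \<Longrightarrow> R \<in> carrier_mat n n"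
  unfolding density_matrix_def by simp

lemma dens_herm: assumes "density_matrix n R" "i < n" "j < n" shows "R$$(i,j) = cnj (R$$(j,i))"
proof -
  have R: "R \<in> carrier_mat n n" and h: "mat_adjoint R = R" using assms(1) unfolding density_matrix_def by auto
  have "R$$(i,j) = mat_adjoint R $$ (i,j)" using h by simp
  also have "\<dots> = cnj (R$$(j,i))" using R assms(2,3) by (simp add: adj_entry)
  finally show ?thesis .
qed

lemma dens_psd: assumes "density_matrix n R" "v \<in> carrier_vec n" shows "0 \<le> Re (qfe n R v)"
proof -
  have R: "R \<in> carrier_mat n n" using assms(1) unfolding density_matrix_def by auto
  have dR: "dim_row R = n" "dim_col R = n" using R by auto
  have dv: "dim_vec v = n" using assms(2) by auto
  have "(\<Sum>i<n. cnj (v $ i) * (R *\<^sub>v v) $ i) = qfe n R v"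
    unfolding qfe_def using dR dv
    by (intro sum.cong refl) (simp add: scalar_prod_def atLeast0LessThan sum_distrib_left mult.assoc)
  then show ?thesis using assms unfolding density_matrix_def by metis
qed

lemma bil_herm: assumes "\<And>i j. i < n \<Longrightarrow> j < n \<Longrightarrow> R$$(i,j) = cnj (R$$(j,i))"
  shows "bil n R u v = cnj (bil n R v u)"
proof -
  have h2: "\<And>i j. i < n \<Longrightarrow> j < n \<Longrightarrow> cnj (R$$(i,j)) = R$$(j,i)" using assms by (metis complex_cnj_cnj)
  have "cnj (bil n R v u) = (\<Sum>i<n. \<Sum>j<n. v$i * cnj (R$$(i,j)) * cnj (u$j))"
    unfolding bil_def by simp
  also have "\<dots> = (\<Sum>j<n. \<Sum>i<n. v$i * cnj (R$$(i,j)) * cnj (u$j))" by (rule sum.swap)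
  also have "\<dots> = bil n R u v" unfolding bil_def
    by (intro sum.cong refl) (simp add: mult_ac h2)
  finally show ?thesis by simp
qed

lemma bil_expand: "qfe n R (vec n (\<lambda>i. x$i + t * y$i)) = qfe n R x + t * bil n R x y + cnj t * bil n R y x + (cnj t * t) * qfe n R y"
  unfolding qfe_def bil_def
  by (simp add: algebra_simps sum.distrib sum_distrib_left)

lemma psd_kernel:
  assumes D: "density_matrix n R" and x: "x \<in> carrier_vec n" and q0: "Re (qfe n R x) = 0"
  shows "R *\<^sub>v x = 0\<^sub>v n"
proof -
  have R: "R \<in> carrier_mat n n" using D by (rule dens_carrier)
  have herm: "\<And>i j. i < n \<Longrightarrow> j < n \<Longrightarrow> R$$(i,j) = cnj (R$$(j,i))" using D dens_herm by blast
  have b0: "bil n R x y = 0" if y: "y \<in> carrier_vec n" for y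
  proof -
    define b where "b = bil n R x y"
    define q where "q = Re (qfe n R y)"
    have q: "q \<ge> 0" unfolding q_def using dens_psd[OF D y] .
    define s where "s = 1 / (q + 1)"
    have s: "s > 0" "s * q < 1" using q unfolding s_def by (auto simp: field_simps)
    define t where "t = - (complex_of_real s) * cnj b"
    have yx: "bil n R y x = cnj b" unfolding b_def by (rule bil_herm[OF herm])
    have "vec n (\<lambda>i. x$i + t * y$i) \<in> carrier_vec n" by simp
    then have "0 \<le> Re (qfe n R (vec n (\<lambda>i. x$i + t * y$i)))" by (rule dens_psd[OF D])
    also have "Re (qfe n R (vec n (\<lambda>i. x$i + t * y$i))) = Re (t * b + cnj t * cnj b) + Re (cnj t * t) * q"
      unfolding bil_expand yx b_def[symmetric] q_def
      using q0 by (simp add: t_def)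
    also have "\<dots> = (cmod b)^2 * (s * s * q - 2 * s)"
      unfolding t_def by (simp add: cmod_def power2_eq_square algebra_simps)
    finally have "0 \<le> (cmod b)^2 * (s * (s * q - 2))" by (simp add: algebra_simps)
    moreover have "s * (s * q - 2) < 0" using s by (intro mult_pos_neg) auto
    ultimately have "\<not> (cmod b)^2 > 0" using mult_pos_neg[of "(cmod b)^2" "s*(s*q-2)"] by linarith
    then have "(cmod b)^2 \<le> 0" by linarith
    then show ?thesis unfolding b_def by simp
  qed
  define y where "y = R *\<^sub>v x"
  have y: "y \<in> carrier_vec n" unfolding y_def by (rule mult_mat_vec_carrier[OF R x])
  have yi: "y $ i = (\<Sum>j<n. R$$(i,j) * x$j)" if "i < n" for i
    unfolding y_def using R x that by (simp add: scalar_prod_def atLeast0LessThan)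
  have "bil n R y x = cnj (bil n R x y)" by (rule bil_herm[OF herm])
  also have "\<dots> = 0" using b0[OF y] by simp
  finally have "bil n R y x = 0" .
  moreover have "bil n R y x = (\<Sum>i<n. cnj (y$i) * y$i)"
    unfolding bil_def by (intro sum.cong refl) (simp add: yi sum_distrib_left mult.assoc)
  ultimately have s0: "(\<Sum>i<n. cnj (y$i) * y$i) = 0" by simp
  have "(\<Sum>i<n. cnj (y$i) * y$i) = complex_of_real (\<Sum>i<n. (cmod (y$i))^2)"
    unfolding of_real_sum by (intro sum.cong refl) (metis complex_norm_square mult.commute)
  with s0 have "(\<Sum>i<n. (cmod (y$i))^2) = 0" by (metis of_real_eq_0_iff)
  then have "\<forall>i\<in>{..<n}. (cmod (y$i))^2 = 0" by (subst sum_nonneg_eq_0_iff[symmetric]) auto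
  then have "\<And>i. i < n \<Longrightarrow> y$i = 0" by auto
  then show ?thesis unfolding y_def[symmetric] using y by (intro eq_vecI) auto
qed


lemma sum4: "(\<Sum>j<(4::nat). f j) = f 0 + f 1 + f 2 + (f 3 :: 'a::comm_monoid_add)"
  by (simp add: eval_nat_numeral add.assoc)

lemma mv_entry: "A \<in> carrier_mat n n \<Longrightarrow> v \<in> carrier_vec n \<Longrightarrow> i < n \<Longrightarrow> (A *\<^sub>v v) $ i = (\<Sum>j<n. A$$(i,j) * v$j)"
  by (auto simp: scalar_prod_def atLeast0LessThan)

lemma mat_vec_zero: "(A :: complex mat) \<in> carrier_mat n m \<Longrightarrow> A *\<^sub>v 0\<^sub>v m = 0\<^sub>v n"
  by (intro eq_vecI) (auto simp: scalar_prod_def)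

lemma ut_kernel:
  fixes B :: "complex mat"
  assumes B: "B \<in> carrier_mat 4 4" and ut: "upper_triangular B"
    and d: "B$$(0,0) \<noteq> 0" "B$$(1,1) \<noteq> 0" "B$$(2,2) \<noteq> 0"
    and y: "y \<in> carrier_vec 4" and k: "B *\<^sub>v y = 0\<^sub>v 4" and y3: "y$3 = 0"
  shows "y = 0\<^sub>v 4"
proof -
  have dB: "dim_row B = 4" using B by auto
  have z: "B$$(i,j) = 0" if "j < i" "i < 4" for i j using ut that dB by auto
  have r: "(\<Sum>j<4. B$$(i,j) * y$j) = 0" if "i < 4" for i
  proof -
    have "(B *\<^sub>v y) $ i = 0" using k that by simp
    then show ?thesis using mv_entry[OF B y that] by simp
  qed
  have r2: "B$$(2,2) * y$2 + B$$(2,3) * y$3 = 0" using r[of 2] z[of 0 2] z[of 1 2] by (simp add: sum4)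
  then have y2: "y$2 = 0" using y3 d by simp
  have r1: "B$$(1,1) * y$1 + B$$(1,2) * y$2 + B$$(1,3) * y$3 = 0" using r[of 1] z[of 0 1] by (simp add: sum4 add.assoc)
  then have y1: "y$1 = 0" using y3 y2 d by simp
  have r0: "B$$(0,0) * y$0 + B$$(0,1) * y$1 + B$$(0,2) * y$2 + B$$(0,3) * y$3 = 0" using r[of 0] by (simp add: sum4)
  then have y0: "y$0 = 0" using y3 y2 y1 d by simp
  show ?thesis
  proof (rule eq_vecI)
    fix i assume "i < dim_vec (0\<^sub>v 4 :: complex vec)"
    then have "i < 4" by simp
    then have "i = 0 \<or> i = 1 \<or> i = 2 \<or> i = 3" by auto
    then show "y $ i = 0\<^sub>v 4 $ i" using y0 y1 y2 y3 by auto
  qed (use y in simp)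
qed

lemma ker_dim1:
  fixes a b c :: complex
  assumes R: "R \<in> carrier_mat 4 4"
    and cp: "char_poly R = [:-a,1:] * [:-b,1:] * [:-c,1:] * [:-0,1:]"
    and abc: "a \<noteq> 0" "b \<noteq> 0" "c \<noteq> 0"
    and x: "x \<in> carrier_vec 4" and x': "x' \<in> carrier_vec 4"
    and kx: "R *\<^sub>v x = 0\<^sub>v 4" and kx': "R *\<^sub>v x' = 0\<^sub>v 4" and nz: "x' \<noteq> 0\<^sub>v 4"
  shows "\<exists>e. x = e \<cdot>\<^sub>v x'"
proof -
  have cp': "char_poly R = (\<Prod>e\<leftarrow>[a,b,c,0]. [:-e,1:])" unfolding cp by (simp only: list.map prod_list.Cons prod_list.Nil mult_1_right mult.assoc)
  obtain B P Q where sd: "schur_decomposition R [a,b,c,0] = (B,P,Q)" by (rule prod_cases3)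
  from schur_decomposition[OF R cp' sd] have sim: "similar_mat_wit R B P Q" and ut: "upper_triangular B"
    and dg: "diag_mat B = [a,b,c,0]" by auto
  from sim have cB: "B \<in> carrier_mat 4 4" and cP: "P \<in> carrier_mat 4 4" and cQ: "Q \<in> carrier_mat 4 4"
    and PQ: "P * Q = 1\<^sub>m 4" and QP: "Q * P = 1\<^sub>m 4" and RPBQ: "R = P * B * Q"
    using R unfolding similar_mat_wit_def Let_def by auto
  have dB: "dim_row B = 4" using cB by auto
  have diag: "B$$(0,0) = a" "B$$(1,1) = b" "B$$(2,2) = c" "B$$(3,3) = 0"
    using dg unfolding diag_mat_def dB by (simp_all add: upt_conv_Cons numeral_eq_Suc)
  have QR: "Q * R = B * Q"
  proof -
    have "Q * R = Q * (P * B * Q)" using RPBQ by simp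
    also have "\<dots> = (Q * P) * B * Q" using cP cB cQ by (simp add: assoc_mult_mat[of _ 4 4 _ 4 _ 4])
    also have "\<dots> = B * Q" using QP cB cQ by simp
    finally show ?thesis .
  qed
  have kerB: "B *\<^sub>v (Q *\<^sub>v v) = 0\<^sub>v 4" if v: "v \<in> carrier_vec 4" and kv: "R *\<^sub>v v = 0\<^sub>v 4" for v
  proof -
    have "B *\<^sub>v (Q *\<^sub>v v) = (B * Q) *\<^sub>v v" using cB cQ v by simp
    also have "\<dots> = (Q * R) *\<^sub>v v" using QR by simp
    also have "\<dots> = Q *\<^sub>v (R *\<^sub>v v)" using cQ R v by simp
    also have "\<dots> = 0\<^sub>v 4" using kv mat_vec_zero[OF cQ] by simp
    finally show ?thesis .
  qed
  have bk: "P *\<^sub>v (Q *\<^sub>v v) = v" if v: "v \<in> carrier_vec 4" for v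
  proof -
    have "P *\<^sub>v (Q *\<^sub>v v) = (P * Q) *\<^sub>v v" using cP cQ v by simp
    then show ?thesis using PQ v by simp
  qed
  define y where "y = Q *\<^sub>v x"
  define y' where "y' = Q *\<^sub>v x'"
  have y: "y \<in> carrier_vec 4" "y' \<in> carrier_vec 4" unfolding y_def y'_def using cQ x x' by auto
  have ky: "B *\<^sub>v y = 0\<^sub>v 4" "B *\<^sub>v y' = 0\<^sub>v 4" unfolding y_def y'_def using kerB x x' kx kx' by auto
  have y'3: "y'$3 \<noteq> 0"
  proof
    assume "y'$3 = 0"
    then have "y' = 0\<^sub>v 4" using ut_kernel[OF cB ut _ _ _ y(2) ky(2)] diag abc by simp
    then have "x' = P *\<^sub>v 0\<^sub>v 4" using bk[OF x'] unfolding y'_def by simp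
    then show False using nz mat_vec_zero[OF cP] by simp
  qed
  define z where "z = y'$3 \<cdot>\<^sub>v y - y$3 \<cdot>\<^sub>v y'"
  have zc: "z \<in> carrier_vec 4" unfolding z_def using y by auto
  have "B *\<^sub>v z = y'$3 \<cdot>\<^sub>v (B *\<^sub>v y) - y$3 \<cdot>\<^sub>v (B *\<^sub>v y')"
    unfolding z_def using cB y by (simp add: mult_minus_distrib_mat_vec mult_mat_vec)
  then have kz: "B *\<^sub>v z = 0\<^sub>v 4" using ky by (intro eq_vecI) auto
  have z3: "z$3 = 0" unfolding z_def using y by simp
  have "z = 0\<^sub>v 4" using ut_kernel[OF cB ut _ _ _ zc kz z3] diag abc by simp
  then have zi: "y'$3 * y$i - y$3 * y'$i = 0" if "i < 4" for i
  proof -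
    have "z$i = 0" using \<open>z = 0\<^sub>v 4\<close> that by simp
    moreover have "z$i = y'$3 * y$i - y$3 * y'$i" unfolding z_def using y that by simp
    ultimately show ?thesis by simp
  qed
  have yy: "y = (y$3 / y'$3) \<cdot>\<^sub>v y'"
  proof (rule eq_vecI)
    fix i assume "i < dim_vec ((y$3 / y'$3) \<cdot>\<^sub>v y')"
    then have i: "i < 4" using y by simp
    show "y $ i = ((y$3 / y'$3) \<cdot>\<^sub>v y') $ i" using zi[OF i] y'3 y i by (simp add: field_simps)
  qed (use y in simp)
  have "x = P *\<^sub>v y" using bk[OF x] unfolding y_def by simp
  also have "\<dots> = (y$3 / y'$3) \<cdot>\<^sub>v (P *\<^sub>v y')" by (subst yy) (rule mult_mat_vec[OF cP y(2)])
  also have "P *\<^sub>v y' = x'" using bk[OF x'] unfolding y'_def by simp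
  finally show ?thesis by blast
qed


definition kdet :: "complex mat \<Rightarrow> complex" where
  "kdet A = A$$(0,0) * A$$(1,1) - A$$(0,1) * A$$(1,0)"
definition pdet :: "complex vec \<Rightarrow> complex" where
  "pdet v = v$0 * v$3 - v$1 * v$2"

definition Ffun :: "real \<Rightarrow> complex mat \<Rightarrow> complex" where
  "Ffun a X = (of_real a)^2 * X$$(1,1) + X$$(2,2) - of_real a * X$$(0,3) - of_real a * X$$(3,0)"

lemma rank1:
  fixes P :: "nat \<Rightarrow> nat \<Rightarrow> complex"
  assumes "P 0 0 * P 1 1 = P 0 1 * P 1 0"
  shows "\<exists>x y. \<forall>c<2. \<forall>e<2. P c e = x c * y e"
proof (cases "P 0 0 = 0")
  case False
  define x where "x = (\<lambda>c::nat. if c = 0 then 1 else P 1 0 / P 0 0)"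
  define y where "y = (\<lambda>e::nat. if e = 0 then P 0 0 else P 0 1)"
  have "\<forall>c<2. \<forall>e<2. P c e = x c * y e"
  proof (intro allI impI)
    fix c e :: nat assume "c < 2" "e < 2"
    then have "c = 0 \<or> c = 1" "e = 0 \<or> e = 1" by auto
    then show "P c e = x c * y e" using False assms unfolding x_def y_def
      by (auto simp: field_simps)
  qed
  then show ?thesis by blast
next
  case True
  show ?thesis
  proof (cases "P 0 1 = 0")
    case False
    define x where "x = (\<lambda>c::nat. if c = 0 then 1 else P 1 1 / P 0 1)"
    define y where "y = (\<lambda>e::nat. if e = 0 then 0 else P 0 1)"
    have "P 1 0 = 0" using assms True False by simp
    then have "\<forall>c<2. \<forall>e<2. P c e = x c * y e"
    proof (intro allI impI)
      fix c e :: nat assume "P 1 0 = 0" "c < 2" "e < 2"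
      then have "c = 0 \<or> c = 1" "e = 0 \<or> e = 1" by auto
      then show "P c e = x c * y e" using False True \<open>P 1 0 = 0\<close> unfolding x_def y_def
        by (auto simp: field_simps)
    qed
    then show ?thesis by blast
  next
    case False2: True
    define x where "x = (\<lambda>c::nat. if c = 0 then 0 else 1::complex)"
    define y where "y = (\<lambda>e::nat. if e = 0 then P 1 0 else P 1 1)"
    have "\<forall>c<2. \<forall>e<2. P c e = x c * y e"
    proof (intro allI impI)
      fix c e :: nat assume "c < 2" "e < 2"
      then have "c = 0 \<or> c = 1" "e = 0 \<or> e = 1" by auto
      then show "P c e = x c * y e" using False2 True unfolding x_def y_def
        by auto
    qed
    then show ?thesis by blast
  qed
qed

lemma kron22_index:
  assumes A: "A \<in> carrier_mat 2 2" and B: "B \<in> carrier_mat 2 2" and i: "i < 4" and k: "k < 4"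
  shows "kron A B $$ (i,k) = A$$(i div 2, k div 2) * B$$(i mod 2, k mod 2)"
proof -
  have d: "dim_row A = 2" "dim_col A = 2" "dim_row B = 2" "dim_col B = 2" using A B by auto
  show ?thesis using i k by (simp add: kron_index d)
qed

lemma F_kraus_deg:
  assumes A: "A \<in> carrier_mat 2 2" and B: "B \<in> carrier_mat 2 2" and R: "R \<in> carrier_mat 4 4"
    and deg: "kdet A = 0 \<or> kdet B = 0"
  shows "\<exists>g. g \<in> carrier_vec 4 \<and> Ffun a (kron A B * R * mat_adjoint (kron A B)) = qfe 4 R g"
proof -
  define K where "K = kron A B"
  have K: "K \<in> carrier_mat 4 4" unfolding K_def using kron_carrier[OF A B] by simp
  define P where "P = (\<lambda>c e. of_real a * A$$(0,c) * cnj (B$$(1,e)) - A$$(1,c) * cnj (B$$(0,e)))"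
  have "P 0 0 * P 1 1 - P 0 1 * P 1 0 = of_real a * kdet A * cnj (kdet B)"
    unfolding P_def kdet_def by (simp add: algebra_simps)
  then have "P 0 0 * P 1 1 = P 0 1 * P 1 0" using deg by auto
  then obtain x y where xy: "\<forall>c<2. \<forall>e<2. P c e = x c * y e" using rank1 by blast
  define g where "g = vec 4 (\<lambda>k. cnj (x (k div 2)) * y (k mod 2))"
  define cc where "cc = (\<lambda>k l. (of_real a)^2 * K$$(1,k) * cnj (K$$(1,l)) + K$$(2,k) * cnj (K$$(2,l))
      - of_real a * K$$(0,k) * cnj (K$$(3,l)) - of_real a * K$$(3,k) * cnj (K$$(0,l)))"
  have ccP: "cc k l = P (k div 2) (l mod 2) * cnj (P (l div 2) (k mod 2))" if "k < 4" "l < 4" for k l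
    unfolding cc_def P_def K_def using that
    by (simp add: kron22_index[OF A B] algebra_simps power2_eq_square)
  have ccg: "cc k l = cnj (g$k) * g$l" if k: "k < 4" and l: "l < 4" for k l
  proof -
    have "k div 2 < 2" "l div 2 < 2" "k mod 2 < 2" "l mod 2 < 2" using k l by auto
    then show ?thesis unfolding ccP[OF k l] g_def using xy k l by (simp add: algebra_simps)
  qed
  have "Ffun a (K * R * mat_adjoint K) = (\<Sum>k<4. \<Sum>l<4. R$$(k,l) * cc k l)"
    unfolding Ffun_def cc_def
    by (simp add: kraus_term_entry[OF K R] sum.distrib sum_distrib_left sum_subtractf algebra_simps)
  also have "\<dots> = qfe 4 R g"
    unfolding qfe_def by (intro sum.cong refl) (simp add: ccg mult_ac)
  finally have "Ffun a (K * R * mat_adjoint K) = qfe 4 R g" .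
  moreover have "g \<in> carrier_vec 4" unfolding g_def by simp
  ultimately show ?thesis unfolding K_def by blast
qed

lemma adjv_pdet:
  assumes A: "A \<in> carrier_mat 2 2" and B: "B \<in> carrier_mat 2 2"
  shows "pdet (adjv 4 (kron A B) z) = cnj (kdet A) * cnj (kdet B) * pdet z"
  unfolding pdet_def adjv_def kdet_def
  by (simp add: sum4 kron22_index[OF A B] algebra_simps)

lemma adjv_carrier: "adjv n K z \<in> carrier_vec n" unfolding adjv_def by simp



definition pv :: "nat \<Rightarrow> real" where "pv i = [3/5, 0, 0, 4/5] ! i"
definition ev :: "nat \<Rightarrow> real" where "ev i = [0, 1, 0, 0] ! i"
definition wv :: "real \<Rightarrow> real \<Rightarrow> nat \<Rightarrow> real" where "wv c s i = [4*c/5, 0, s, -3*c/5] ! i"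
definition zv :: "real \<Rightarrow> real \<Rightarrow> nat \<Rightarrow> real" where "zv c s i = [-4*s/5, 0, c, 3*s/5] ! i"

definition sg :: "real \<Rightarrow> real \<Rightarrow> real \<Rightarrow> real \<Rightarrow> real \<Rightarrow> complex mat" where
  "sg l1 l2 l3 c s = mat 4 4 (\<lambda>(i,j). of_real (l1 * pv i * pv j + l2 * ev i * ev j + l3 * wv c s i * wv c s j))"

definition Um :: "real \<Rightarrow> real \<Rightarrow> complex mat" where
  "Um c s = mat 4 4 (\<lambda>(i,j). of_real ([pv i, ev i, wv c s i, zv c s i] ! j))"

definition Dm :: "real \<Rightarrow> real \<Rightarrow> real \<Rightarrow> complex mat" where
  "Dm l1 l2 l3 = mat 4 4 (\<lambda>(i,j). if i = j then of_real ([l1, l2, l3, 0] ! i) else 0)"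

definition zvec :: "real \<Rightarrow> real \<Rightarrow> complex vec" where
  "zvec c s = vec 4 (\<lambda>i. of_real (zv c s i))"

lemma sum4': "(\<Sum>j\<in>{0..<(4::nat)}. f j) = f 0 + f 1 + f 2 + (f 3 :: 'a::comm_monoid_add)"
  by (simp add: atLeast0LessThan sum4)

lemma less4: "(i::nat) < 4 \<Longrightarrow> i = 0 \<or> i = 1 \<or> i = 2 \<or> i = 3" by auto

lemma sg_carrier: "sg l1 l2 l3 c s \<in> carrier_mat 4 4" unfolding sg_def by simp

lemma sg_entry: "i < 4 \<Longrightarrow> j < 4 \<Longrightarrow> sg l1 l2 l3 c s $$ (i,j) = of_real (l1 * pv i * pv j + l2 * ev i * ev j + l3 * wv c s i * wv c s j)"
  unfolding sg_def by simp

lemma Um_carrier: "Um c s \<in> carrier_mat 4 4" unfolding Um_def by simp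
lemma Dm_carrier: "Dm l1 l2 l3 \<in> carrier_mat 4 4" unfolding Dm_def by simp

lemma Um_orth:
  assumes cs: "c^2 + s^2 = 1"
  shows "Um c s * transpose_mat (Um c s) = 1\<^sub>m 4" "transpose_mat (Um c s) * Um c s = 1\<^sub>m 4"
proof -
  have cs': "of_real c * of_real c + of_real s * of_real s = (1::complex)"
    using cs by (metis of_real_1 of_real_add of_real_mult power2_eq_square)
  have cs1: "of_real s * of_real s = (1::complex) - of_real c * of_real c" using cs' by (simp add: algebra_simps)
  have cs2: "of_real s * (of_real s * x) = (x::complex) - of_real c * (of_real c * x)" for x
    by (simp only: mult.assoc[symmetric] cs1) (simp add: algebra_simps)
  show "Um c s * transpose_mat (Um c s) = 1\<^sub>m 4"
  proof (rule eq_matI)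
    fix i j assume "i < dim_row (1\<^sub>m 4 :: complex mat)" "j < dim_col (1\<^sub>m 4 :: complex mat)"
    then have i: "i < 4" and j: "j < 4" by auto
    show "(Um c s * transpose_mat (Um c s)) $$ (i,j) = 1\<^sub>m 4 $$ (i,j)"
      using less4[OF i] less4[OF j] i j cs'
      by (auto simp: Um_def scalar_prod_def sum4' pv_def ev_def wv_def zv_def algebra_simps cs1 cs2 add_divide_distrib diff_divide_distrib)
  qed (auto simp: Um_def)
  show "transpose_mat (Um c s) * Um c s = 1\<^sub>m 4"
  proof (rule eq_matI)
    fix i j assume "i < dim_row (1\<^sub>m 4 :: complex mat)" "j < dim_col (1\<^sub>m 4 :: complex mat)"
    then have i: "i < 4" and j: "j < 4" by auto
    show "(transpose_mat (Um c s) * Um c s) $$ (i,j) = 1\<^sub>m 4 $$ (i,j)"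
      using less4[OF i] less4[OF j] i j cs'
      by (auto simp: Um_def scalar_prod_def sum4' pv_def ev_def wv_def zv_def algebra_simps cs1 cs2 add_divide_distrib diff_divide_distrib)
  qed (auto simp: Um_def)
qed



lemma sg_eq: "sg l1 l2 l3 c s = Um c s * Dm l1 l2 l3 * transpose_mat (Um c s)"
proof (rule eq_matI)
  fix i j assume "i < dim_row (Um c s * Dm l1 l2 l3 * transpose_mat (Um c s))" "j < dim_col (Um c s * Dm l1 l2 l3 * transpose_mat (Um c s))"
  then have i: "i < 4" and j: "j < 4" by (auto simp: Um_def)
  show "sg l1 l2 l3 c s $$ (i,j) = (Um c s * Dm l1 l2 l3 * transpose_mat (Um c s)) $$ (i,j)"
    using less4[OF i] less4[OF j] i j
    by (auto simp: sg_def Um_def Dm_def scalar_prod_def sum4' pv_def ev_def wv_def zv_def algebra_simps)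
qed (auto simp: sg_def Um_def)

lemma Dm_ut: "upper_triangular (Dm l1 l2 l3)"
  unfolding upper_triangular_def Dm_def by auto

lemma Dm_diag: "diag_mat (Dm l1 l2 l3) = map complex_of_real [l1,l2,l3,0]"
  unfolding diag_mat_def Dm_def by (simp add: upt_conv_Cons numeral_eq_Suc)

lemma sg_charpoly:
  assumes cs: "c^2 + s^2 = 1"
  shows "char_poly (sg l1 l2 l3 c s) = [:- complex_of_real l1, 1:] * [:- complex_of_real l2, 1:] *
                    [:- complex_of_real l3, 1:] * [:- complex_of_real 0, 1:]"
proof -
  have "similar_mat (sg l1 l2 l3 c s) (Dm l1 l2 l3)"
    by (rule similar_matI[of _ _ "Um c s" "transpose_mat (Um c s)" 4])
       (use sg_carrier Um_carrier Dm_carrier Um_orth[OF cs] sg_eq in auto)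
  then have "char_poly (sg l1 l2 l3 c s) = char_poly (Dm l1 l2 l3)" by (rule char_poly_similar)
  also have "\<dots> = (\<Prod>a\<leftarrow>diag_mat (Dm l1 l2 l3). [:- a, 1:])"
    by (rule char_poly_upper_triangular[OF Dm_carrier Dm_ut])
  also have "\<dots> = [:- complex_of_real l1, 1:] * [:- complex_of_real l2, 1:] *
                    [:- complex_of_real l3, 1:] * [:- complex_of_real 0, 1:]"
    unfolding Dm_diag by (simp only: list.map prod_list.Cons prod_list.Nil mult_1_right mult.assoc)
  finally show ?thesis .
qed

lemma sg_herm: "mat_adjoint (sg l1 l2 l3 c s) = sg l1 l2 l3 c s"
proof (rule eq_matI)
  fix i j assume "i < dim_row (sg l1 l2 l3 c s)" "j < dim_col (sg l1 l2 l3 c s)"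
  then have i: "i < 4" and j: "j < 4" by (auto simp: sg_def)
  show "mat_adjoint (sg l1 l2 l3 c s) $$ (i,j) = sg l1 l2 l3 c s $$ (i,j)"
    using i j by (simp add: adj_entry sg_def algebra_simps)
qed (auto simp: sg_def)

lemma sg_trace: assumes cs: "c^2 + s^2 = 1" and l: "l1 + l2 + l3 = 1"
  shows "mtrace (sg l1 l2 l3 c s) = 1"
proof -
  have "mtrace (sg l1 l2 l3 c s) = of_real (l1 + l2 + l3 * (c^2 + s^2))"
    unfolding mtrace_def by (simp add: sg_def sum4 pv_def ev_def wv_def algebra_simps power2_eq_square)
  then show ?thesis using cs l by simp
qed

lemma sg_qfe: "qfe 4 (sg l1 l2 l3 c s) v =
   of_real l1 * (cnj (\<Sum>i<4. of_real (pv i) * v$i) * (\<Sum>i<4. of_real (pv i) * v$i))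
 + of_real l2 * (cnj (\<Sum>i<4. of_real (ev i) * v$i) * (\<Sum>i<4. of_real (ev i) * v$i))
 + of_real l3 * (cnj (\<Sum>i<4. of_real (wv c s i) * v$i) * (\<Sum>i<4. of_real (wv c s i) * v$i))"
  unfolding qfe_def by (simp add: sg_entry sum4 pv_def ev_def wv_def algebra_simps)

lemma re_term: assumes "l \<ge> 0" shows "0 \<le> Re (of_real l * (cnj z * z))"
proof -
  have "cnj z * z = of_real ((cmod z)^2)"
    by (metis complex_norm_square mult.commute)
  then have "of_real l * (cnj z * z) = of_real (l * (cmod z)^2)" by simp
  then show ?thesis using assms by simp
qed

lemma sg_psd: assumes "l1 \<ge> 0" "l2 \<ge> 0" "l3 \<ge> 0"
  shows "0 \<le> Re (qfe 4 (sg l1 l2 l3 c s) v)"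
  unfolding sg_qfe plus_complex.sel using re_term[OF assms(1)] re_term[OF assms(2)] re_term[OF assms(3)]
  by (meson add_nonneg_nonneg)



lemma form_qfe: assumes R: "R \<in> carrier_mat n n" and v: "v \<in> carrier_vec n"
  shows "(\<Sum>i<n. cnj (v $ i) * (R *\<^sub>v v) $ i) = qfe n R v"
proof -
  have dR: "dim_row R = n" "dim_col R = n" using R by auto
  have dv: "dim_vec v = n" using v by auto
  show ?thesis unfolding qfe_def using dR dv
    by (intro sum.cong refl) (simp add: scalar_prod_def atLeast0LessThan sum_distrib_left mult.assoc)
qed

lemma sg_in_class:
  assumes l: "l1 \<ge> 0" "l2 \<ge> 0" "l3 \<ge> 0" "l1 + l2 + l3 = 1" and cs: "c^2 + s^2 = 1"
  shows "sg l1 l2 l3 c s \<in> spectrum_class l1 l2 l3 0"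
proof -
  have "density_matrix 4 (sg l1 l2 l3 c s)"
    unfolding density_matrix_def
  proof (intro conjI ballI)
    fix v :: "complex vec" assume v: "v \<in> carrier_vec 4"
    show "0 \<le> Re (\<Sum>i<4. cnj (v $ i) * (sg l1 l2 l3 c s *\<^sub>v v) $ i)"
      unfolding form_qfe[OF sg_carrier v] using sg_psd l(1-3) by blast
  qed (use sg_carrier sg_herm sg_trace[OF cs l(4)] in auto)
  then show ?thesis unfolding spectrum_class_def two_qubit_states_def using sg_charpoly[OF cs] by simp
qed

lemma sg_kernel: "sg l1 l2 l3 c s *\<^sub>v zvec c s = 0\<^sub>v 4"
proof (rule eq_vecI)
  fix i assume "i < dim_vec (0\<^sub>v 4 :: complex vec)"
  then have i: "i < 4" by simp
  show "(sg l1 l2 l3 c s *\<^sub>v zvec c s) $ i = 0\<^sub>v 4 $ i"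
    using less4[OF i] i
    by (auto simp: sg_def zvec_def scalar_prod_def sum4' pv_def ev_def wv_def zv_def algebra_simps)
qed (simp add: sg_def)

lemma zvec_carrier: "zvec c s \<in> carrier_vec 4" unfolding zvec_def by simp

lemma zvec_pdet: "pdet (zvec c s) = - of_real (12/25 * s^2)"
  unfolding pdet_def zvec_def zv_def by (simp add: algebra_simps power2_eq_square)

lemma F_sg: "Re (Ffun a (sg l1 l2 l3 c s)) = a^2 * l2 + l3 * s^2 - 24/25 * a * (l1 - l3 * c^2)"
  unfolding Ffun_def by (simp add: sg_entry pv_def ev_def wv_def algebra_simps power2_eq_square add_divide_distrib diff_divide_distrib)

lemma Ffun_apply_kraus:
  assumes R: "R \<in> carrier_mat 4 4" and Ks: "\<forall>K\<in>set Ks. K \<in> carrier_mat 4 4"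
  shows "Ffun a (apply_kraus 4 Ks R) = (\<Sum>K\<leftarrow>Ks. Ffun a (K * R * mat_adjoint K))"
  unfolding Ffun_def using R Ks
  by (simp add: apply_kraus_entry sum_list_addf sum_list_subtractf sum_list_const_mult)

lemma qfe_apply_kraus:
  assumes R: "R \<in> carrier_mat 4 4" and Ks: "\<forall>K\<in>set Ks. K \<in> carrier_mat 4 4"
  shows "qfe 4 (apply_kraus 4 Ks R) z = (\<Sum>K\<leftarrow>Ks. qfe 4 (K * R * mat_adjoint K) z)"
proof -
  have "qfe 4 (apply_kraus 4 Ks R) z = (\<Sum>i<4. \<Sum>j<4. \<Sum>K\<leftarrow>Ks. cnj (z$i) * (K * R * mat_adjoint K) $$ (i,j) * z$j)"
    unfolding qfe_def using R Ks
    by (intro sum.cong refl) (simp add: apply_kraus_entry sum_list_const_mult sum_list_mult_const)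
  also have "\<dots> = (\<Sum>i<4. \<Sum>j<4. \<Sum>k<length Ks. cnj (z$i) * (Ks!k * R * mat_adjoint (Ks!k)) $$ (i,j) * z$j)"
    by (simp add: sum_list_sum_nth atLeast0LessThan)
  also have "\<dots> = (\<Sum>i<4. \<Sum>k<length Ks. \<Sum>j<4. cnj (z$i) * (Ks!k * R * mat_adjoint (Ks!k)) $$ (i,j) * z$j)"
    by (intro sum.cong refl sum.swap)
  also have "\<dots> = (\<Sum>k<length Ks. \<Sum>i<4. \<Sum>j<4. cnj (z$i) * (Ks!k * R * mat_adjoint (Ks!k)) $$ (i,j) * z$j)"
    by (rule sum.swap)
  also have "\<dots> = (\<Sum>K\<leftarrow>Ks. \<Sum>i<4. \<Sum>j<4. cnj (z$i) * (K * R * mat_adjoint K) $$ (i,j) * z$j)"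
    by (simp add: sum_list_sum_nth atLeast0LessThan)
  finally show ?thesis unfolding qfe_def .
qed



lemma re_sum_list: "Re (\<Sum>x\<leftarrow>xs. f x) = (\<Sum>x\<leftarrow>xs. Re (f x))"
  by (induction xs) auto

lemma reach:
  assumes D: "density_matrix 4 R" and Ks: "locc_kraus 2 2 2 2 Ks"
    and sig: "apply_kraus 4 Ks R = sg l1 l2 l3 c s" and F: "Re (Ffun a (sg l1 l2 l3 c s)) < 0"
  shows "\<exists>A B. A \<in> carrier_mat 2 2 \<and> B \<in> carrier_mat 2 2 \<and> kdet A \<noteq> 0 \<and> kdet B \<noteq> 0 \<and>
      R *\<^sub>v adjv 4 (kron A B) (zvec c s) = 0\<^sub>v 4"
proof -
  have R: "R \<in> carrier_mat 4 4" using D by (rule dens_carrier)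
  have prod: "\<forall>K\<in>set Ks. \<exists>A B. A \<in> carrier_mat 2 2 \<and> B \<in> carrier_mat 2 2 \<and> K = kron A B"
    using locc_prod[OF Ks] .
  have KC: "\<forall>K\<in>set Ks. K \<in> carrier_mat 4 4"
  proof
    fix K assume "K \<in> set Ks"
    then obtain A B where "A \<in> carrier_mat 2 2" "B \<in> carrier_mat 2 2" "K = kron A B" using prod by metis
    then show "K \<in> carrier_mat 4 4" using kron_carrier[of A 2 2 B 2 2] by simp
  qed
  have "Re (\<Sum>K\<leftarrow>Ks. Ffun a (K * R * mat_adjoint K)) < 0"
    using F unfolding sig[symmetric] Ffun_apply_kraus[OF R KC] .
  then have "\<not> (\<forall>K\<in>set Ks. 0 \<le> Re (Ffun a (K * R * mat_adjoint K)))"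
    unfolding re_sum_list using sum_list_nonneg[of "map (\<lambda>K. Re (Ffun a (K * R * mat_adjoint K))) Ks"] by auto
  then obtain K where K: "K \<in> set Ks" and FK: "Re (Ffun a (K * R * mat_adjoint K)) < 0" by (meson not_le)
  then obtain A B where A: "A \<in> carrier_mat 2 2" and B: "B \<in> carrier_mat 2 2" and KAB: "K = kron A B"
    using prod by metis
  have nd: "kdet A \<noteq> 0 \<and> kdet B \<noteq> 0"
  proof (rule ccontr)
    assume "\<not> (kdet A \<noteq> 0 \<and> kdet B \<noteq> 0)"
    then have "kdet A = 0 \<or> kdet B = 0" by simp
    from F_kraus_deg[OF A B R this, of a] obtain g where g: "g \<in> carrier_vec 4"
      and eq: "Ffun a (kron A B * R * mat_adjoint (kron A B)) = qfe 4 R g" by blast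
    have "0 \<le> Re (qfe 4 R g)" by (rule dens_psd[OF D g])
    then show False using FK eq KAB by simp
  qed
  define z where "z = zvec c s"
  have zc: "z \<in> carrier_vec 4" unfolding z_def by (rule zvec_carrier)
  have "qfe 4 (sg l1 l2 l3 c s) z = (\<Sum>i<4. cnj (z $ i) * (sg l1 l2 l3 c s *\<^sub>v z) $ i)"
    using form_qfe[OF sg_carrier zc] by simp
  also have "\<dots> = 0" unfolding z_def sg_kernel by simp
  finally have "qfe 4 (apply_kraus 4 Ks R) z = 0" using sig by simp
  moreover have "map (\<lambda>K. qfe 4 (K * R * mat_adjoint K) z) Ks = map (\<lambda>K. qfe 4 R (adjv 4 K z)) Ks"
  proof (rule map_cong[OF refl])
    fix K assume "K \<in> set Ks"
    then have "K \<in> carrier_mat 4 4" by (rule bspec[OF KC])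
    then show "qfe 4 (K * R * mat_adjoint K) z = qfe 4 R (adjv 4 K z)" by (rule qfe_kraus[OF _ R])
  qed
  ultimately have "(\<Sum>K\<leftarrow>Ks. qfe 4 R (adjv 4 K z)) = 0"
    unfolding qfe_apply_kraus[OF R KC] by simp
  then have s0: "(\<Sum>K\<leftarrow>Ks. Re (qfe 4 R (adjv 4 K z))) = 0"
    by (metis re_sum_list zero_complex.sel(1))
  have nn: "\<And>x. x \<in> set (map (\<lambda>K. Re (qfe 4 R (adjv 4 K z))) Ks) \<Longrightarrow> 0 \<le> x"
    using dens_psd[OF D adjv_carrier] by auto
  have "\<forall>x\<in>set (map (\<lambda>K. Re (qfe 4 R (adjv 4 K z))) Ks). x = 0"
    using s0 sum_list_nonneg_eq_0_iff[of "map (\<lambda>K. Re (qfe 4 R (adjv 4 K z))) Ks", OF nn] by simp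
  then have "Re (qfe 4 R (adjv 4 K z)) = 0" using K by simp
  then have "R *\<^sub>v adjv 4 K z = 0\<^sub>v 4" by (rule psd_kernel[OF D adjv_carrier])
  then show ?thesis using A B nd KAB unfolding z_def by blast
qed

lemma adjv_e2_nz:
  assumes A: "A \<in> carrier_mat 2 2" and B: "B \<in> carrier_mat 2 2" and nd: "kdet A \<noteq> 0" "kdet B \<noteq> 0"
  shows "adjv 4 (kron A B) (zvec 1 0) \<noteq> 0\<^sub>v 4"
proof
  assume h: "adjv 4 (kron A B) (zvec 1 0) = 0\<^sub>v 4"
  have e: "adjv 4 (kron A B) (zvec 1 0) $ k = cnj (A$$(1, k div 2) * B$$(0, k mod 2))" if "k < 4" for k
    unfolding adjv_def zvec_def zv_def using that by (simp add: sum4 kron22_index[OF A B])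
  have "A$$(1,0) * B$$(0,0) = 0" "A$$(1,0) * B$$(0,1) = 0" "A$$(1,1) * B$$(0,0) = 0" "A$$(1,1) * B$$(0,1) = 0"
    using h e[of 0] e[of 1] e[of 2] e[of 3] by (auto dest!: arg_cong[where f="\<lambda>v. v $ _"])
  then have "(A$$(1,0) = 0 \<and> A$$(1,1) = 0) \<or> (B$$(0,0) = 0 \<and> B$$(0,1) = 0)" by auto
  then show False using nd unfolding kdet_def by auto
qed



lemma get_kraus:
  assumes "maximally_entangled_in S R" "sig \<in> S"
  shows "\<exists>Ks. locc_kraus 2 2 2 2 Ks \<and> apply_kraus 4 Ks R = sig"
  using assms unfolding maximally_entangled_in_def locc_map_def by metis

theorem theorem2:
  fixes l1 l2 l3 :: real
  assumes "l1 \<ge> l2" and "l2 \<ge> l3" and "l3 \<ge> 0" and "l1 + l2 + l3 = 1"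
    and "l3 > 0" and "l1 \<noteq> l3"
  shows "\<not> (\<exists>\<rho>. maximally_entangled_in (spectrum_class l1 l2 l3 0) \<rho>)"
proof
  assume "\<exists>\<rho>. maximally_entangled_in (spectrum_class l1 l2 l3 0) \<rho>"
  then obtain R where me: "maximally_entangled_in (spectrum_class l1 l2 l3 0) R" by blast
  then have RS: "R \<in> spectrum_class l1 l2 l3 0" unfolding maximally_entangled_in_def by simp
  then have D: "density_matrix 4 R"
    and cp: "char_poly R = [:- complex_of_real l1, 1:] * [:- complex_of_real l2, 1:] *
                    [:- complex_of_real l3, 1:] * [:- complex_of_real 0, 1:]"
    unfolding spectrum_class_def two_qubit_states_def by auto
  have Rc: "R \<in> carrier_mat 4 4" using D by (rule dens_carrier)
  define d where "d = l1 - l3"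
  have l2p: "l2 > 0" and l1p: "l1 > 0" using assms by auto
  have dp: "d > 0" unfolding d_def using assms by auto
  have d1: "d \<le> 1" unfolding d_def using assms by auto
  have l2le: "l2 \<le> 1" and l3le: "l3 \<le> 1" using assms by auto
  define a where "a = d / (2 * l2)"
  define s1 where "s1 = d / 5"
  define c1 where "c1 = sqrt (1 - s1^2)"
  have s1p: "s1 > 0" unfolding s1_def using dp by simp
  have s1sq: "s1^2 \<le> 1" unfolding s1_def using dp d1 by (simp add: power_le_one)
  have c1sq: "c1^2 = 1 - s1^2" unfolding c1_def using s1sq by simp
  have cs1: "c1^2 + s1^2 = 1" using c1sq by simp
  have cs0: "(1::real)^2 + 0^2 = 1" by simp
  have lnn: "l1 \<ge> 0" "l2 \<ge> 0" "l3 \<ge> 0" using assms by auto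
  have F0: "Re (Ffun a (sg l1 l2 l3 1 0)) < 0"
  proof -
    have "Re (Ffun a (sg l1 l2 l3 1 0)) = a^2 * l2 - 24/25 * a * d"
      unfolding F_sg d_def by simp
    also have "\<dots> = d^2 / l2 * (-23/100)"
      unfolding a_def using l2p by (simp add: field_simps power2_eq_square)
    also have "\<dots> < 0" using dp l2p by (intro mult_pos_neg) auto
    finally show ?thesis .
  qed
  have F1: "Re (Ffun a (sg l1 l2 l3 c1 s1)) < 0"
  proof -
    define F where "F = Re (Ffun a (sg l1 l2 l3 c1 s1))"
    have Feq: "F = a^2 * l2 + l3 * s1^2 - 24/25 * a * (d + l3 * s1^2)"
      unfolding F_def F_sg c1sq d_def by (simp add: algebra_simps)
    have "F * l2 = d^2 * (-23/100 + l2*l3/25) - 12*l3*d^3/625"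
      unfolding Feq a_def s1_def using l2p by (simp add: field_simps power2_eq_square power3_eq_cube)
    moreover have "l2 * l3 \<le> 1" using l2le l3le lnn by (simp add: mult_le_one)
    then have "-23/100 + l2*l3/25 < 0" by simp
    then have "d^2 * (-23/100 + l2*l3/25) < 0" using dp by (intro mult_pos_neg) auto
    moreover have "12*l3*d^3/625 \<ge> 0" using lnn dp by simp
    ultimately have "F * l2 < 0" by linarith
    then have "F < 0" using l2p by (simp add: mult_less_0_iff)
    then show ?thesis unfolding F_def .
  qed
  obtain Ks0 where K0: "locc_kraus 2 2 2 2 Ks0" "apply_kraus 4 Ks0 R = sg l1 l2 l3 1 0"
    using get_kraus[OF me sg_in_class[OF lnn assms(4) cs0]] by blast
  obtain Ks1 where K1: "locc_kraus 2 2 2 2 Ks1" "apply_kraus 4 Ks1 R = sg l1 l2 l3 c1 s1"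
    using get_kraus[OF me sg_in_class[OF lnn assms(4) cs1]] by blast
  obtain A0 B0 where A0: "A0 \<in> carrier_mat 2 2" and B0: "B0 \<in> carrier_mat 2 2"
    and nd0: "kdet A0 \<noteq> 0" "kdet B0 \<noteq> 0" and k0: "R *\<^sub>v adjv 4 (kron A0 B0) (zvec 1 0) = 0\<^sub>v 4"
    using reach[OF D K0 F0] by blast
  obtain A1 B1 where A1: "A1 \<in> carrier_mat 2 2" and B1: "B1 \<in> carrier_mat 2 2"
    and nd1: "kdet A1 \<noteq> 0" "kdet B1 \<noteq> 0" and k1: "R *\<^sub>v adjv 4 (kron A1 B1) (zvec c1 s1) = 0\<^sub>v 4"
    using reach[OF D K1 F1] by blast
  define x' where "x' = adjv 4 (kron A0 B0) (zvec 1 0)"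
  define x where "x = adjv 4 (kron A1 B1) (zvec c1 s1)"
  have nz: "x' \<noteq> 0\<^sub>v 4" unfolding x'_def by (rule adjv_e2_nz[OF A0 B0 nd0])
  have px': "pdet x' = 0" unfolding x'_def adjv_pdet[OF A0 B0] zvec_pdet by simp
  have px: "pdet x \<noteq> 0" unfolding x_def adjv_pdet[OF A1 B1] zvec_pdet using nd1 s1p by simp
  have cp': "char_poly R = [:- complex_of_real l1, 1:] * [:- complex_of_real l2, 1:] *
                    [:- complex_of_real l3, 1:] * [:- 0, 1:]" using cp by simp
  have xc: "x \<in> carrier_vec 4" unfolding x_def by (rule adjv_carrier)
  have x'c: "x' \<in> carrier_vec 4" unfolding x'_def by (rule adjv_carrier)
  have ne: "complex_of_real l1 \<noteq> 0" "complex_of_real l2 \<noteq> 0" "complex_of_real l3 \<noteq> 0"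
    using l1p l2p assms(5) by auto
  have "\<exists>e. x = e \<cdot>\<^sub>v x'"
    by (rule ker_dim1[OF Rc cp' ne xc x'c k1[folded x_def] k0[folded x'_def] nz])
  then obtain e where "x = e \<cdot>\<^sub>v x'" by blast
  then have "pdet x = e^2 * pdet x'"
    unfolding pdet_def using x'c
    by (simp add: algebra_simps power2_eq_square)
  then show False using px px' by simp
qed

end
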